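(* Let $F$ be a field of characteristic not $2$. Then every PC-map $\mathrm{UT}(3,F)\to\mathrm{UT}(3,F)$ is a composition of a permutable PC-map, a field automorphism, and a central PC-map.
   Context: $\mathrm{UT}(3,F)$ is the group of upper unitriangular $3\times3$ matrices over $F$; $a_{ij}$ denotes the $(i,j)$ entry, $e_{ij}$ the matrix unit, $t_{ij}(\alpha)=e+\alpha e_{ij}$. $[x,y]=xyx^{-1}y^{-1}$. A PC-map is a bijection $\varphi$ of the group with $\varphi([x,y])=[\varphi(x),\varphi(y)]$ for all $x,y$. A permutable PC-map is a map of the form $a\mapsto\begin{pmatrix}1&\alpha a_{12}+\beta a_{23}&(\alpha\delta-\beta\gamma)a_{13}\\0&1&\gamma a_{12}+\delta a_{23}\\0&0&1\end{pmatrix}$ with fixed $\alpha,\beta,\gamma,\delta\in F$, $\alpha\delta-\beta\gamma\ne0$. A field automorphism of $\mathrm{UT}(3,F)$ is the map $(a_{ij})\mapsto(\theta(a_{ij}))$ for a field automorphism $\theta$ of $F$. A central PC-map is a PC-map of the form $a\mapsto a\,t_{13}(f(a))$ for some function $f:\mathrm{UT}(3,F)\to F$. *)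

theory Defs
  imports Main
begin

text \<open>An element of UT(3,F) (upper unitriangular 3x3 matrix over F) is represented by
  the triple of its above-diagonal entries (a12, a23, a13).\<close>

type_synonym 'a ut3 = "'a \<times> 'a \<times> 'a"

definition a12 :: "'a ut3 \<Rightarrow> 'a" where "a12 x = fst x"
definition a23 :: "'a ut3 \<Rightarrow> 'a" where "a23 x = fst (snd x)"
definition a13 :: "'a ut3 \<Rightarrow> 'a" where "a13 x = snd (snd x)"

definition ut_mult :: "'a::field ut3 \<Rightarrow> 'a ut3 \<Rightarrow> 'a ut3" where
  "ut_mult x y = (a12 x + a12 y, a23 x + a23 y, a13 x + a13 y + a12 x * a23 y)"

definition ut_inv :: "'a::field ut3 \<Rightarrow> 'a ut3" where
  "ut_inv x = (- a12 x, - a23 x, a12 x * a23 x - a13 x)"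

definition ut_comm :: "'a::field ut3 \<Rightarrow> 'a ut3 \<Rightarrow> 'a ut3" where
  "ut_comm x y = ut_mult (ut_mult (ut_mult x y) (ut_inv x)) (ut_inv y)"

definition t13 :: "'a::field \<Rightarrow> 'a ut3" where
  "t13 \<alpha> = (0, 0, \<alpha>)"

definition PC_map :: "('a::field ut3 \<Rightarrow> 'a ut3) \<Rightarrow> bool" where
  "PC_map \<phi> \<longleftrightarrow> bij \<phi> \<and> (\<forall>x y. \<phi> (ut_comm x y) = ut_comm (\<phi> x) (\<phi> y))"

definition permutable_map :: "'a::field \<Rightarrow> 'a \<Rightarrow> 'a \<Rightarrow> 'a \<Rightarrow> 'a ut3 \<Rightarrow> 'a ut3" where
  "permutable_map \<alpha> \<beta> \<gamma> \<delta> a =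
     (\<alpha> * a12 a + \<beta> * a23 a, \<gamma> * a12 a + \<delta> * a23 a, (\<alpha> * \<delta> - \<beta> * \<gamma>) * a13 a)"

definition permutable_PC_map :: "('a::field ut3 \<Rightarrow> 'a ut3) \<Rightarrow> bool" where
  "permutable_PC_map \<psi> \<longleftrightarrow>
     (\<exists>\<alpha> \<beta> \<gamma> \<delta>. \<alpha> * \<delta> - \<beta> * \<gamma> \<noteq> 0 \<and> \<psi> = permutable_map \<alpha> \<beta> \<gamma> \<delta>)"

definition field_automorphism :: "('a::field \<Rightarrow> 'a) \<Rightarrow> bool" where
  "field_automorphism \<theta> \<longleftrightarrow> bij \<theta> \<and> (\<forall>x y. \<theta> (x + y) = \<theta> x + \<theta> y)
      \<and> (\<forall>x y. \<theta> (x * y) = \<theta> x * \<theta> y) \<and> \<theta> 1 = 1"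

definition ut_field_aut :: "('a::field \<Rightarrow> 'a) \<Rightarrow> 'a ut3 \<Rightarrow> 'a ut3" where
  "ut_field_aut \<theta> a = (\<theta> (a12 a), \<theta> (a23 a), \<theta> (a13 a))"

definition central_PC_map :: "('a::field ut3 \<Rightarrow> 'a ut3) \<Rightarrow> bool" where
  "central_PC_map \<psi> \<longleftrightarrow> PC_map \<psi> \<and> (\<exists>f. \<forall>a. \<psi> a = ut_mult a (t13 (f a)))"

end

theory Submission
  imports Defs
begin

lemma a_simps[simp]: "a12 (u,v,w) = u" "a23 (u,v,w) = v" "a13 (u,v,w) = w"
  by (simp_all add: a12_def a23_def a13_def)

lemma ut_eta: "x = (a12 x, a23 x, a13 x)"
  by (simp add: a12_def a23_def a13_def)

lemma ut_comm_eq: "ut_comm x y = (0, 0, a12 x * a23 y - a23 x * a12 y)"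
  unfolding ut_comm_def ut_mult_def ut_inv_def by (simp add: algebra_simps)

lemma lin_inj:
  fixes p q r s u v u' v' :: "'a::field"
  assumes "u * p + v * r = u' * p + v' * r" "u * q + v * s = u' * q + v' * s"
    and "p * s - q * r \<noteq> 0"
  shows "u = u' \<and> v = v'"
proof -
  have "(u - u') * (p * s - q * r) = (u * p + v * r - (u' * p + v' * r)) * s - (u * q + v * s - (u' * q + v' * s)) * r"
    by (simp add: algebra_simps)
  also have "\<dots> = 0" using assms by simp
  finally have 1: "u = u'" using assms(3) by simp
  have "(v - v') * (p * s - q * r) = (u * q + v * s - (u' * q + v' * s)) * p - (u * p + v * r - (u' * p + v' * r)) * q"
    by (simp add: algebra_simps)
  also have "\<dots> = 0" using assms by simp
  finally have "v = v'" using assms(3) by simp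
  with 1 show ?thesis by simp
qed

theorem mainTheorem9:
  fixes \<phi> :: "'a::field ut3 \<Rightarrow> 'a ut3"
  assumes "CHAR('a) \<noteq> 2"
    and "PC_map \<phi>"
  shows "\<exists>\<pi> \<theta> \<kappa>. permutable_PC_map \<pi> \<and> field_automorphism \<theta> \<and> central_PC_map \<kappa>
           \<and> \<phi> = \<pi> \<circ> ut_field_aut \<theta> \<circ> \<kappa>"
proof -
  have bijp: "bij \<phi>" and hc: "\<And>x y. \<phi> (ut_comm x y) = ut_comm (\<phi> x) (\<phi> y)"
    using assms(2) unfolding PC_map_def by auto
  define g where "g c = a13 (\<phi> (0,0,c))" for c
  have hZ: "\<phi> (0,0,c) = (0,0,g c)" for c
  proof -
    have "(0,0,c) = ut_comm (1,0,0) (0::'a,c,0::'a)" by (simp add: ut_comm_eq)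
    hence "\<phi> (0,0,c) = ut_comm (\<phi> (1,0,0)) (\<phi> (0,c,0))" using hc by metis
    hence "a12 (\<phi> (0,0,c)) = 0" "a23 (\<phi> (0,0,c)) = 0" by (simp_all add: ut_comm_eq)
    thus ?thesis using ut_eta[of "\<phi> (0,0,c)"] g_def by simp
  qed
  have hdet: "a12 (\<phi> x) * a23 (\<phi> y) - a23 (\<phi> x) * a12 (\<phi> y) = g (a12 x * a23 y - a23 x * a12 y)" for x y
  proof -
    have "\<phi> (ut_comm x y) = ut_comm (\<phi> x) (\<phi> y)" by (rule hc)
    thus ?thesis by (simp add: ut_comm_eq hZ)
  qed
  have ginj: "g a = g b \<Longrightarrow> a = b" for a b
  proof -
    assume "g a = g b"
    hence "\<phi> (0,0,a) = \<phi> (0,0,b)" by (simp add: hZ)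
    thus "a = b" using bijp unfolding bij_def inj_def by auto
  qed
  have g0: "g 0 = 0" using hdet[of "(0,0,0)" "(0,0,0)"] by simp
  define f1 where "f1 = \<phi> (1,0,0)"
  define f2 where "f2 = \<phi> (0,1,0)"
  define p where "p = a12 f1"
  define q where "q = a23 f1"
  define r where "r = a12 f2"
  define s where "s = a23 f2"
  define d where "d = p * s - q * r"
  have dg: "d = g 1" using hdet[of "(1,0,0)" "(0,1,0)"] by (simp add: d_def p_def q_def r_def s_def f1_def f2_def)
  have d0: "d \<noteq> 0" using dg g0 ginj[of 1 0] by auto
  define \<theta> where "\<theta> c = g c / d" for c
  have form1: "a12 (\<phi> x) = \<theta> (a12 x) * p + \<theta> (a23 x) * r"
    and form2: "a23 (\<phi> x) = \<theta> (a12 x) * q + \<theta> (a23 x) * s" for x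
  proof -
    have G2: "p * a23 (\<phi> x) - q * a12 (\<phi> x) = g (a23 x)"
      using hdet[of "(1,0,0)" x] by (simp add: p_def q_def f1_def)
    have G1: "a12 (\<phi> x) * s - a23 (\<phi> x) * r = g (a12 x)"
      using hdet[of x "(0,1,0)"] by (simp add: r_def s_def f2_def)
    have "a12 (\<phi> x) * d = g (a12 x) * p + g (a23 x) * r"
      unfolding G1[symmetric] G2[symmetric] d_def by (simp add: algebra_simps)
    thus "a12 (\<phi> x) = \<theta> (a12 x) * p + \<theta> (a23 x) * r"
      using d0 unfolding \<theta>_def by (simp add: field_simps)
    have "a23 (\<phi> x) * d = g (a12 x) * q + g (a23 x) * s"
      unfolding G1[symmetric] G2[symmetric] d_def by (simp add: algebra_simps)
    thus "a23 (\<phi> x) = \<theta> (a12 x) * q + \<theta> (a23 x) * s"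
      using d0 unfolding \<theta>_def by (simp add: field_simps)
  qed
  have tkey: "\<theta> (a * b - c * e) = \<theta> a * \<theta> b - \<theta> c * \<theta> e" for a b c e
  proof -
    have "g (a * b - c * e) = (\<theta> a * p + \<theta> c * r) * (\<theta> e * q + \<theta> b * s) - (\<theta> a * q + \<theta> c * s) * (\<theta> e * p + \<theta> b * r)"
      using hdet[of "(a,c,0)" "(e,b,0)"] form1[of "(a,c,0)"] form2[of "(a,c,0)"]
        form1[of "(e,b,0)"] form2[of "(e,b,0)"] by simp
    also have "\<dots> = (\<theta> a * \<theta> b - \<theta> c * \<theta> e) * d" unfolding d_def by (simp add: algebra_simps)
    finally have X: "g (a * b - c * e) = (\<theta> a * \<theta> b - \<theta> c * \<theta> e) * d" .
    have "\<theta> (a * b - c * e) = g (a * b - c * e) / d" by (simp add: \<theta>_def)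
    also have "\<dots> = \<theta> a * \<theta> b - \<theta> c * \<theta> e" using X d0 by simp
    finally show ?thesis .
  qed
  have t0: "\<theta> 0 = 0" by (simp add: \<theta>_def g0)
  have t1: "\<theta> 1 = 1" using d0 by (simp add: \<theta>_def dg)
  have tmul: "\<theta> (a * b) = \<theta> a * \<theta> b" for a b using tkey[of a b 0 0] t0 by simp
  have tsub: "\<theta> (a - b) = \<theta> a - \<theta> b" for a b using tkey[of a 1 b 1] t1 by simp
  have tneg: "\<theta> (- b) = - \<theta> b" for b using tsub[of 0 b] t0 by simp
  have tadd: "\<theta> (a + b) = \<theta> a + \<theta> b" for a b using tsub[of a "-b"] tneg[of b] by simp
  have tinj: "inj \<theta>" unfolding inj_def \<theta>_def using d0 ginj by auto
  have tsurj: "surj \<theta>"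
  proof -
    { fix t
      obtain x where x: "\<phi> x = (t * p, t * q, 0)" using bijp unfolding bij_def surj_def by metis
      have "\<theta> (a12 x) = t \<and> \<theta> (a23 x) = 0"
        apply (rule lin_inj[where p=p and q=q and r=r and s=s])
        using form1[of x] form2[of x] x d0 unfolding d_def by simp_all
      hence "t \<in> range \<theta>" by auto }
    thus ?thesis by auto
  qed
  have tbij: "bij \<theta>" using tinj tsurj by (simp add: bij_def)
  have faut: "field_automorphism \<theta>" unfolding field_automorphism_def
    using tbij tadd tmul t1 by auto
  define \<pi> where "\<pi> = permutable_map p r q s"
  have pip: "permutable_PC_map \<pi>" unfolding permutable_PC_map_def \<pi>_def
    using d0 unfolding d_def by (metis mult.commute)
  define \<kappa> where "\<kappa> x = (a12 x, a23 x, inv \<theta> (a13 (\<phi> x) / d))" for x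
  have dd: "p * s - r * q = d" by (simp add: d_def mult.commute)
  have comp: "\<phi> = \<pi> \<circ> ut_field_aut \<theta> \<circ> \<kappa>"
  proof
    fix x
    have "\<theta> (inv \<theta> (a13 (\<phi> x) / d)) = a13 (\<phi> x) / d"
      using tsurj by (simp add: surj_f_inv_f)
    hence "(\<pi> \<circ> ut_field_aut \<theta> \<circ> \<kappa>) x = (a12 (\<phi> x), a23 (\<phi> x), a13 (\<phi> x))"
      using d0 form1[of x] form2[of x] dd
      by (simp add: \<pi>_def \<kappa>_def ut_field_aut_def permutable_map_def ac_simps)
    thus "\<phi> x = (\<pi> \<circ> ut_field_aut \<theta> \<circ> \<kappa>) x" using ut_eta[of "\<phi> x"] by simp
  qed
  have kinj: "inj \<kappa>"
  proof (rule injI)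
    fix x y assume h: "\<kappa> x = \<kappa> y"
    hence e1: "a12 x = a12 y" "a23 x = a23 y" and
      e3: "inv \<theta> (a13 (\<phi> x) / d) = inv \<theta> (a13 (\<phi> y) / d)" by (simp_all add: \<kappa>_def)
    have "inj (inv \<theta>)" using tbij by (simp add: bij_imp_bij_inv bij_is_inj)
    hence "a13 (\<phi> x) / d = a13 (\<phi> y) / d" using e3 unfolding inj_def by blast
    hence "a13 (\<phi> x) = a13 (\<phi> y)" using d0 by simp
    moreover have "a12 (\<phi> x) = a12 (\<phi> y)" "a23 (\<phi> x) = a23 (\<phi> y)"
      using form1 form2 e1 by simp_all
    ultimately have "\<phi> x = \<phi> y" using ut_eta[of "\<phi> x"] ut_eta[of "\<phi> y"] by simp
    thus "x = y" using bijp by (meson bij_is_inj injD)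
  qed
  have ksurj: "surj \<kappa>"
  proof -
    { fix u :: "'a ut3"
      obtain x where x: "\<phi> x = (\<theta> (a12 u) * p + \<theta> (a23 u) * r, \<theta> (a12 u) * q + \<theta> (a23 u) * s, d * \<theta> (a13 u))"
        using bijp unfolding bij_def surj_def by metis
      have "\<theta> (a12 x) = \<theta> (a12 u) \<and> \<theta> (a23 x) = \<theta> (a23 u)"
        apply (rule lin_inj[where p=p and q=q and r=r and s=s])
        using form1[of x] form2[of x] x d0 unfolding d_def by simp_all
      hence "a12 x = a12 u" "a23 x = a23 u" using tinj by (auto simp: inj_def)
      moreover have "inv \<theta> (a13 (\<phi> x) / d) = a13 u" using x d0 tinj by simp
      ultimately have "\<kappa> x = u" using ut_eta[of u] by (simp add: \<kappa>_def)
      hence "u \<in> range \<kappa>" by (metis rangeI) }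
    thus ?thesis by auto
  qed
  have kcomm: "\<kappa> (ut_comm x y) = ut_comm (\<kappa> x) (\<kappa> y)" for x y
  proof -
    have "\<theta> c = g c / d" for c by (simp add: \<theta>_def)
    hence "inv \<theta> (g c / d) = c" for c using tinj by (metis inv_f_f)
    thus ?thesis by (simp add: \<kappa>_def ut_comm_eq hZ)
  qed
  have kc: "central_PC_map \<kappa>" unfolding central_PC_map_def PC_map_def
  proof (intro conjI allI exI)
    show "bij \<kappa>" using kinj ksurj by (simp add: bij_def)
    show "\<kappa> (ut_comm x y) = ut_comm (\<kappa> x) (\<kappa> y)" for x y by (rule kcomm)
    show "\<kappa> a = ut_mult a (t13 (a13 (\<kappa> a) - a13 a))" for a
      using ut_eta[of a] by (simp add: \<kappa>_def ut_mult_def t13_def)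
  qed
  show ?thesis using pip faut kc comp by blast
qed

end
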